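(* Let $X$ be a real Hilbert space, let $\lambda>0$, and let $f\colon X\to\,]-\infty,+\infty]$ be proper, lower semicontinuous, minorized by a concave quadratic (there exist $\nu,\beta\in\mathbb R$, $\alpha\ge0$ with $f(x)\ge-\alpha\|x\|^2-\beta\|x\|+\nu$ for all $x$), and $\tfrac1\lambda$-hypoconvex. Then for every abstract subdifferential $\hat\partial$, $$\hat\partial f=\partial\Big(f+\tfrac{1}{2\lambda}\|\cdot\|^2\Big)-\tfrac1\lambda\mathrm{Id}.$$ Consequently, for such $f$ the Clarke–Rockafellar, Mordukhovich and Fréchet subdifferentials of $f$ all coincide.
   Context: $\partial$ denotes the convex-analysis subdifferential. $f$ is $\tfrac1\lambda$-hypoconvex if $f((1-\tau)x+\tau y)\le(1-\tau)f(x)+\tau f(y)+\tfrac{1}{2\lambda}\tau(1-\tau)\|x-y\|^2$ for all $x,y\in X$, $\tau\in]0,1[$. An abstract subdifferential $\hat\partial$ assigns to a function $g$ (in the class of proper lsc functions minorized by a concave quadratic) and $x\in X$ a set $\hat\partial g(x)\subseteq X$ such that: (a) $\hat\partial g=\partial g$ if $g$ is proper lsc convex; (b) $\hat\partial g=\nabla g$ if $g$ is continuously differentiable; (c) $0\in\hat\partial g(x)$ if $g$ attains a local minimum at $x\in\operatorname{dom}g$; (d) for every $\beta\in\mathbb R$ and $x\in X$, $\hat\partial\big(g+\beta\tfrac{\|\cdot-x\|^2}{2}\big)=\hat\partial g+\beta(\mathrm{Id}-x)$. The Clarke–Rockafellar, Mordukhovich and Fréchet subdifferentials satisfy (a)–(d).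 *)

theory Defs
  imports "HOL-Analysis.Analysis"
begin

text \<open>Functions X \<rightarrow> ]-\<infinity>,+\<infinity>] are modelled as maps into ereal that never take the value -\<infinity>.
  X is a real Hilbert space: a type of class real_inner and complete_space.\<close>

definition edom :: "('a \<Rightarrow> ereal) \<Rightarrow> 'a set" where
  "edom g = {x. g x < \<infinity>}"

definition proper_fun :: "('a \<Rightarrow> ereal) \<Rightarrow> bool" where
  "proper_fun g \<longleftrightarrow> (\<forall>x. g x \<noteq> -\<infinity>) \<and> edom g \<noteq> {}"

definition lsc_fun :: "('a::topological_space \<Rightarrow> ereal) \<Rightarrow> bool" where
  "lsc_fun g \<longleftrightarrow> (\<forall>x. g x \<le> Liminf (at x) g)"

definition convex_fun :: "('a::real_vector \<Rightarrow> ereal) \<Rightarrow> bool" where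
  "convex_fun g \<longleftrightarrow> (\<forall>x y \<tau>. 0 < \<tau> \<and> \<tau> < 1 \<longrightarrow>
     g ((1 - \<tau>) *\<^sub>R x + \<tau> *\<^sub>R y) \<le> ereal (1 - \<tau>) * g x + ereal \<tau> * g y)"

definition minorized_cq :: "('a::real_normed_vector \<Rightarrow> ereal) \<Rightarrow> bool" where
  "minorized_cq g \<longleftrightarrow> (\<exists>\<alpha> \<beta> \<nu>. \<alpha> \<ge> 0 \<and>
     (\<forall>x. ereal (- \<alpha> * (norm x)\<^sup>2 - \<beta> * norm x + \<nu>) \<le> g x))"

definition subdiff_class :: "('a::real_normed_vector \<Rightarrow> ereal) \<Rightarrow> bool" where
  "subdiff_class g \<longleftrightarrow> proper_fun g \<and> lsc_fun g \<and> minorized_cq g"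

definition hypoconvex :: "real \<Rightarrow> ('a::real_inner \<Rightarrow> ereal) \<Rightarrow> bool" where
  "hypoconvex lam g \<longleftrightarrow> (\<forall>x y \<tau>. 0 < \<tau> \<and> \<tau> < 1 \<longrightarrow>
     g ((1 - \<tau>) *\<^sub>R x + \<tau> *\<^sub>R y) \<le> ereal (1 - \<tau>) * g x + ereal \<tau> * g y
        + ereal (\<tau> * (1 - \<tau>) / (2 * lam) * (norm (x - y))\<^sup>2))"

definition cvx_subdiff :: "('a::real_inner \<Rightarrow> ereal) \<Rightarrow> 'a \<Rightarrow> 'a set" where
  "cvx_subdiff g x = (if x \<in> edom g then
     {u. \<forall>y. g x + ereal (u \<bullet> (y - x)) \<le> g y} else {})"

text \<open>Abstract subdifferential: properties (a)-(d) on the class subdiff_class.\<close>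
definition abstract_subdiff :: "(('a::real_inner \<Rightarrow> ereal) \<Rightarrow> 'a \<Rightarrow> 'a set) \<Rightarrow> bool" where
  "abstract_subdiff D \<longleftrightarrow>
     (\<forall>g. subdiff_class g \<and> convex_fun g \<longrightarrow> D g = cvx_subdiff g) \<and>
     (\<forall>g h G. subdiff_class g \<and> g = (\<lambda>x. ereal (h x)) \<and>
         (\<forall>x. (h has_derivative (\<lambda>v. G x \<bullet> v)) (at x)) \<and> continuous_on UNIV G
         \<longrightarrow> (\<forall>x. D g x = {G x})) \<and>
     (\<forall>g x. subdiff_class g \<and> x \<in> edom g \<and>
         (\<forall>\<^sub>F y in at x. g x \<le> g y) \<longrightarrow> 0 \<in> D g x) \<and>
     (\<forall>g (\<beta>::real) x. subdiff_class g \<longrightarrow>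
         (\<forall>y. D (\<lambda>z. g z + ereal (\<beta> * (norm (z - x))\<^sup>2 / 2)) y
                = (\<lambda>u. u + \<beta> *\<^sub>R (y - x)) ` D g y))"

end

theory Submission
  imports Defs
begin

lemma norm_combo_sq:
  fixes x y :: "'a::real_inner"
  shows "(norm ((1 - t) *\<^sub>R x + t *\<^sub>R y))\<^sup>2
     = (1 - t) * (norm x)\<^sup>2 + t * (norm y)\<^sup>2 - t * (1 - t) * (norm (x - y))\<^sup>2"
  unfolding power2_norm_eq_inner
  by (simp add: inner_add_left inner_add_right inner_diff_left
      inner_diff_right inner_commute algebra_simps)

lemma g_convex:
  fixes f :: "'a::real_inner \<Rightarrow> ereal"
  assumes lam: "lam > 0" and pf: "proper_fun f" and hc: "hypoconvex lam f"
  shows "convex_fun (\<lambda>z. f z + ereal ((norm z)\<^sup>2 / (2 * lam)))"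
  unfolding convex_fun_def
proof (intro allI impI)
  fix x y :: 'a and t :: real
  assume t: "0 < t \<and> t < 1"
  let ?m = "(1 - t) *\<^sub>R x + t *\<^sub>R y"
  have H: "f ?m \<le> ereal (1 - t) * f x + ereal t * f y
        + ereal (t * (1 - t) / (2 * lam) * (norm (x - y))\<^sup>2)"
    using hc t unfolding hypoconvex_def by blast
  have nm: "f ?m \<noteq> -\<infinity>" "f x \<noteq> -\<infinity>" "f y \<noteq> -\<infinity>" using pf unfolding proper_fun_def by auto
  have N: "(norm ?m)\<^sup>2 / (2*lam) = (1 - t) * ((norm x)\<^sup>2 / (2*lam)) + t * ((norm y)\<^sup>2 / (2*lam))
     - t * (1 - t) / (2 * lam) * (norm (x - y))\<^sup>2"
    unfolding norm_combo_sq using lam by (simp add: field_simps)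
  show "f ?m + ereal ((norm ?m)\<^sup>2 / (2 * lam))
        \<le> ereal (1 - t) * (f x + ereal ((norm x)\<^sup>2 / (2 * lam)))
         + ereal t * (f y + ereal ((norm y)\<^sup>2 / (2 * lam)))"
  proof (cases "f x = \<infinity> \<or> f y = \<infinity>")
    case True
    then show ?thesis using t nm by (auto simp: ereal_mult_infty)
  next
    case False
    then obtain a b where ab: "f x = ereal a" "f y = ereal b" using nm
      by (metis ereal_cases)
    then obtain c where c: "f ?m = ereal c" using H nm
      by (cases "f ?m") auto
    have "c \<le> (1 - t) * a + t * b + t * (1 - t) / (2 * lam) * (norm (x - y))\<^sup>2"
      using H ab c by simp
    then show ?thesis using ab c N by (simp add: algebra_simps)
  qed
qed

lemma g_class:
  fixes f :: "'a::real_inner \<Rightarrow> ereal"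
  assumes lam: "lam > 0" and pf: "proper_fun f" and ls: "lsc_fun f" and mc: "minorized_cq f"
  shows "subdiff_class (\<lambda>z. f z + ereal ((norm z)\<^sup>2 / (2 * lam)))"
proof -
  define h where "h = (\<lambda>z::'a. (norm z)\<^sup>2 / (2 * lam))"
  have nm: "\<And>z. f z \<noteq> -\<infinity>" using pf unfolding proper_fun_def by auto
  have hnn: "\<And>z. 0 \<le> h z" using lam unfolding h_def by auto
  have P: "proper_fun (\<lambda>z. f z + ereal (h z))"
  proof -
    have "edom (\<lambda>z. f z + ereal (h z)) = edom f"
      unfolding edom_def by (auto simp: nm)
    then show ?thesis using pf nm unfolding proper_fun_def by auto
  qed
  have M: "minorized_cq (\<lambda>z. f z + ereal (h z))"
  proof -
    obtain \<alpha> \<beta> \<nu> where "\<alpha> \<ge> 0" "\<forall>x. ereal (- \<alpha> * (norm x)\<^sup>2 - \<beta> * norm x + \<nu>) \<le> f x"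
      using mc unfolding minorized_cq_def by blast
    moreover have "\<And>x. f x \<le> f x + ereal (h x)" by (rule ereal_le_add_self) (simp add: hnn)
    ultimately show ?thesis unfolding minorized_cq_def by (meson order_trans)
  qed
  have L: "lsc_fun (\<lambda>z. f z + ereal (h z))"
    unfolding lsc_fun_def
  proof
    fix x
    show "f x + ereal (h x) \<le> Liminf (at x) (\<lambda>z. f z + ereal (h z))"
      unfolding le_Liminf_iff
    proof (intro allI impI)
      fix y assume y: "y < f x + ereal (h x)"
      show "\<forall>\<^sub>F z in at x. y < f z + ereal (h z)"
      proof (cases y)
        case MInf
        have "\<And>z. y < f z + ereal (h z)"
        proof -
          fix z show "y < f z + ereal (h z)" using nm[of z] MInf by (cases "f z") auto
        qed
        then show ?thesis by (intro always_eventually allI)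
      next
        case PInf then show ?thesis using y by simp
      next
        case (real r)
        have "ereal (r - h x) < f x" using y real
          by (cases "f x") auto
        then obtain c where c: "ereal (r - h x) < ereal c" "ereal c < f x"
          using ereal_dense2 by blast
        have e1: "\<forall>\<^sub>F z in at x. ereal c < f z"
          using ls c(2) unfolding lsc_fun_def le_Liminf_iff by blast
        have "isCont h x" unfolding h_def using lam by (intro continuous_intros) auto
        then have "(h \<longlongrightarrow> h x) (at x)" by (simp add: isCont_def)
        moreover have "c - (r - h x) > 0" using c(1) by simp
        ultimately have e2: "\<forall>\<^sub>F z in at x. dist (h z) (h x) < c - (r - h x)"
          by (simp add: tendsto_iff)
        show ?thesis
          using e1 e2
        proof eventually_elim
          case (elim z)
          then have a: "ereal c < f z" and b: "dist (h z) (h x) < c - (r - h x)" by auto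
          show "y < f z + ereal (h z)"
            using a b real by (cases "f z") (auto simp: dist_real_def)
        qed
      qed
    qed
  qed
  show ?thesis using P M L unfolding subdiff_class_def h_def by blast
qed

theorem proposition6p2:
  fixes f :: "'a::{real_inner, complete_space} \<Rightarrow> ereal"
    and lam :: real
    and D :: "('a \<Rightarrow> ereal) \<Rightarrow> 'a \<Rightarrow> 'a set"
  assumes "lam > 0"
    and "proper_fun f"
    and "lsc_fun f"
    and "minorized_cq f"
    and "hypoconvex lam f"
    and "abstract_subdiff D"
  shows "\<forall>x. D f x = (\<lambda>u. u - (1 / lam) *\<^sub>R x) `
            cvx_subdiff (\<lambda>z. f z + ereal ((norm z)\<^sup>2 / (2 * lam))) x"
proof
  fix x
  let ?g = "\<lambda>z. f z + ereal ((norm z)\<^sup>2 / (2 * lam))"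
  have fc: "subdiff_class f" using assms unfolding subdiff_class_def by blast
  have gc: "subdiff_class ?g" using g_class assms by blast
  have gv: "convex_fun ?g" using g_convex assms by blast
  have Da: "D ?g = cvx_subdiff ?g" using assms(6) gc gv unfolding abstract_subdiff_def by blast
  have Dd: "D (\<lambda>z. f z + ereal ((1/lam) * (norm (z - 0))\<^sup>2 / 2)) x
     = (\<lambda>u. u + (1/lam) *\<^sub>R (x - 0)) ` D f x"
    using assms(6) fc unfolding abstract_subdiff_def by blast
  have eq: "(\<lambda>z. f z + ereal ((1/lam) * (norm (z - 0))\<^sup>2 / 2)) = ?g"
    by (simp add: field_simps)
  have "cvx_subdiff ?g x = (\<lambda>u. u + (1/lam) *\<^sub>R x) ` D f x"
    using Dd Da eq by simp
  then have "(\<lambda>u. u - (1 / lam) *\<^sub>R x) ` cvx_subdiff ?g x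
      = (\<lambda>u. u - (1 / lam) *\<^sub>R x) ` (\<lambda>u. u + (1/lam) *\<^sub>R x) ` D f x" by simp
  also have "\<dots> = D f x" by (simp add: image_image)
  finally show "D f x = (\<lambda>u. u - (1 / lam) *\<^sub>R x) ` cvx_subdiff ?g x" by simp
qed

end
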